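(* Let $A\in M_n\otimes M_m$ be positive semi-definite. Then $A$ is entangled (i.e. $A\notin \mathbb V_1=M_n^+\otimes M_m^+$) if and only if there exists an exposed positive linear map $\phi:M_m\to M_n$ such that $\langle A,\phi\rangle<0$.
   Context: $M_k$ denotes the $k\times k$ complex matrices and $M_k^+$ its positive semi-definite elements; $\mathbb V_1=M_n^+\otimes M_m^+$ is the convex cone of separable positive semi-definite matrices in $M_n\otimes M_m$ (convex sums of $zz^*$ with $z$ a product vector). The bilinear pairing between $M_n\otimes M_m$ and the space $\mathcal L(M_m,M_n)$ of linear maps $M_m\to M_n$ is defined by $\langle y\otimes x,\phi\rangle=\mathrm{Tr}(\phi(x)y^{\mathrm t})$ for $x\in M_m$, $y\in M_n$, extended bilinearly. $\mathbb P_1$ is the cone of positive linear maps $M_m\to M_n$ (those sending positive semi-definite matrices to positive semi-definite matrices). For a face $F$ of $\mathbb P_1$, $F'=\{A\in\mathbb V_1:\langle A,\phi\rangle=0\ \forall \phi\in F\}$, and for a face $G$ of $\mathbb V_1$, $G'=\{\phi\in\mathbb P_1:\langle A,\phi\rangle=0\ \forall A\in G\}$. A positive map $\phi\ne 0$ is called exposed if the ray $L_\phi=\{\lambda\phi:\lambda\ge0\}$ satisfies $L_\phi=L_\phi''$, i.e. it generates an exposed ray of $\mathbb P_1$. *)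

theory Defs
  imports "HOL-Analysis.Analysis"
begin

text \<open>M_n \<otimes> M_m is identified with complex^('n \<times> 'm)^('n \<times> 'm) via the Kronecker
  convention (y \<otimes> x) at ((i,k),(j,l)) = y at (i,j) times x at (k,l).\<close>

definition cmscale :: "complex \<Rightarrow> complex^'k::finite^'k \<Rightarrow> complex^'k^'k" where
  "cmscale c X = (\<chi> i j. c * X$i$j)"

definition psd :: "complex^'k::finite^'k \<Rightarrow> bool" where
  "psd A \<longleftrightarrow> (\<forall>x::complex^'k.
      Im (\<Sum>i\<in>UNIV. cnj (x$i) * (A *v x)$i) = 0 \<and> Re (\<Sum>i\<in>UNIV. cnj (x$i) * (A *v x)$i) \<ge> 0)"

definition lin_map :: "(complex^'m::finite^'m \<Rightarrow> complex^'n::finite^'n) \<Rightarrow> bool" where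
  "lin_map f \<longleftrightarrow> (\<forall>X Y. f (X + Y) = f X + f Y) \<and> (\<forall>c X. f (cmscale c X) = cmscale c (f X))"

definition P1 :: "(complex^'m::finite^'m \<Rightarrow> complex^'n::finite^'n) set" where
  "P1 = {\<phi>. lin_map \<phi> \<and> (\<forall>X. psd X \<longrightarrow> psd (\<phi> X))}"

definition proj1 :: "complex^'k::finite \<Rightarrow> complex^'k^'k" where
  "proj1 z = (\<chi> a b. z$a * cnj (z$b))"

definition prodvec :: "complex^'n \<Rightarrow> complex^'m \<Rightarrow> complex^('n \<times> 'm)" where
  "prodvec \<xi> \<eta> = (\<chi> p. \<xi>$(fst p) * \<eta>$(snd p))"

text \<open>The cone V_1 of separable positive semi-definite matrices: finite sums of z z^*
  with z a product vector (nonnegative coefficients absorbed into z).\<close>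
definition V1 :: "(complex^('n::finite \<times> 'm::finite)^('n \<times> 'm)) set" where
  "V1 = {A. \<exists>(N::nat) \<xi> \<eta>. A = (\<Sum>r<N. proj1 (prodvec (\<xi> r) (\<eta> r)))}"

text \<open>Bilinear pairing: the bilinear extension of
  <y \<otimes> x, \<phi>> = Tr(\<phi>(x) y^t), written out via the block decomposition
  A = \<Sum>_{i,j} e_ij \<otimes> A_ij, giving <A,\<phi>> = \<Sum>_{i,j} (\<phi>(A_ij))_{ij}.\<close>
definition block :: "complex^('n::finite \<times> 'm::finite)^('n \<times> 'm) \<Rightarrow> 'n \<Rightarrow> 'n \<Rightarrow> complex^'m^'m" where
  "block A i j = (\<chi> k l. A$(i,k)$(j,l))"

definition pair :: "complex^('n::finite \<times> 'm::finite)^('n \<times> 'm) \<Rightarrow> (complex^'m^'m \<Rightarrow> complex^'n^'n) \<Rightarrow> complex" where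
  "pair A \<phi> = (\<Sum>i\<in>UNIV. \<Sum>j\<in>UNIV. (\<phi> (block A i j))$i$j)"

definition perpV :: "(complex^'m::finite^'m \<Rightarrow> complex^'n::finite^'n) set \<Rightarrow> (complex^('n \<times> 'm)^('n \<times> 'm)) set" where
  "perpV F = {A \<in> V1. \<forall>\<phi>\<in>F. pair A \<phi> = 0}"

definition perpP :: "(complex^('n::finite \<times> 'm::finite)^('n \<times> 'm)) set \<Rightarrow> (complex^'m^'m \<Rightarrow> complex^'n^'n) set" where
  "perpP G = {\<phi> \<in> P1. \<forall>A\<in>G. pair A \<phi> = 0}"

definition ray :: "(complex^'m::finite^'m \<Rightarrow> complex^'n::finite^'n) \<Rightarrow> (complex^'m^'m \<Rightarrow> complex^'n^'n) set" where
  "ray \<phi> = {(\<lambda>X. cmscale (complex_of_real t) (\<phi> X)) | t. t \<ge> 0}"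

definition exposed_map :: "(complex^'m::finite^'m \<Rightarrow> complex^'n::finite^'n) \<Rightarrow> bool" where
  "exposed_map \<phi> \<longleftrightarrow> \<phi> \<in> P1 \<and> \<phi> \<noteq> (\<lambda>X. 0) \<and>
     perpP (perpV (ray \<phi>) :: (complex^('n \<times> 'm)^('n \<times> 'm)) set) = ray \<phi>"

end

theory Submission
  imports Defs
begin


definition qf :: "complex^'k::finite^'k \<Rightarrow> complex^'k \<Rightarrow> complex" where
  "qf M x = (\<Sum>i\<in>UNIV. \<Sum>j\<in>UNIV. cnj (x$i) * M$i$j * x$j)"

lemma psd_qf: "psd M \<longleftrightarrow> (\<forall>x. Im (qf M x) = 0 \<and> Re (qf M x) \<ge> 0)"
  unfolding psd_def qf_def matrix_vector_mult_def by (simp add: sum_distrib_left mult.assoc)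

definition herm :: "complex^'k::finite^'k \<Rightarrow> bool" where
  "herm M \<longleftrightarrow> (\<forall>p q. M$q$p = cnj (M$p$q))"

definition tv :: "'k::finite \<Rightarrow> 'k \<Rightarrow> complex \<Rightarrow> complex \<Rightarrow> complex^'k" where
  "tv k l a b = (\<chi> i. if i = k then a else if i = l then b else 0)"

definition ev :: "'k::finite \<Rightarrow> complex \<Rightarrow> complex^'k" where
  "ev k a = (\<chi> i. if i = k then a else 0)"

lemma sum1: "(\<And>i. i \<noteq> k \<Longrightarrow> f i = 0) \<Longrightarrow> sum f (UNIV::'k::finite set) = f k"
  by (subst sum.mono_neutral_right[of UNIV "{k}"]) auto

lemma sum2: "k \<noteq> l \<Longrightarrow> (\<And>i. i \<noteq> k \<Longrightarrow> i \<noteq> l \<Longrightarrow> f i = 0) \<Longrightarrow> sum f (UNIV::'k::finite set) = f k + f l"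
  by (subst sum.mono_neutral_right[of UNIV "{k,l}"]) auto

lemma qf_ev: "qf M (ev k a) = cnj a * M$k$k * a"
  unfolding qf_def ev_def
  by (subst sum1[of k]; simp; subst sum1[of k]; simp)

lemma tv_k[simp]: "tv k l a b $ k = a" by (simp add: tv_def)
lemma tv_l[simp]: "k \<noteq> l \<Longrightarrow> tv k l a b $ l = b" by (simp add: tv_def)
lemma tv_o[simp]: "i \<noteq> k \<Longrightarrow> i \<noteq> l \<Longrightarrow> tv k l a b $ i = 0" by (simp add: tv_def)

lemma qf_tv: assumes "k \<noteq> l"
  shows "qf M (tv k l a b) = cnj a * M$k$k * a + cnj a * M$k$l * b + cnj b * M$l$k * a + cnj b * M$l$l * b"
proof -
  have "qf M (tv k l a b) = (\<Sum>i\<in>UNIV. cnj (tv k l a b $ i) * M$i$k * a + cnj (tv k l a b $ i) * M$i$l * b)"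
    unfolding qf_def
    by (rule sum.cong[OF refl], subst sum2[OF assms], auto simp: assms)
  also have "\<dots> = cnj a * M$k$k * a + cnj a * M$k$l * b + cnj b * M$l$k * a + cnj b * M$l$l * b"
    by (subst sum2[OF assms], auto simp: assms)
  finally show ?thesis .
qed

lemma psd_herm: assumes "psd M" shows "herm M"
  unfolding herm_def
proof (intro allI)
  fix p q
  show "M$q$p = cnj (M$p$q)"
  proof (cases "p = q")
    case True
    have "Im (qf M (ev p 1)) = 0" using assms psd_qf by blast
    then show ?thesis using True by (simp add: qf_ev complex_eq_iff)
  next
    case False
    have "Im (qf M (tv p q 1 1)) = 0" "Im (qf M (tv p q 1 \<i>)) = 0" "Im (qf M (ev p 1)) = 0" "Im (qf M (ev q 1)) = 0"
      using assms psd_qf by blast+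
    then show ?thesis using False by (simp add: qf_tv qf_ev complex_eq_iff)
  qed
qed

lemma pol: assumes "\<And>x. qf M x = 0" shows "M = 0"
proof -
  have "M$p$q = 0" for p q
  proof (cases "p = q")
    case True
    show ?thesis using assms[of "ev p 1"] True by (simp add: qf_ev)
  next
    case False
    have a: "qf M (tv p q 1 1) = 0" "qf M (tv p q 1 \<i>) = 0" "qf M (ev p 1) = 0" "qf M (ev q 1) = 0"
      using assms by blast+
    then show ?thesis using False by (simp add: qf_tv qf_ev complex_eq_iff)
  qed
  then show ?thesis by (simp add: vec_eq_iff)
qed

lemma psd_zero_row: assumes "psd M" "M$s$s = 0" shows "M$s$l = 0"
proof (cases "l = s")
  case True then show ?thesis using assms by simp
next
  case False
  define u where "u = M$s$l"
  have h: "herm M" using psd_herm assms(1) by blast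
  have ls: "M$l$s = cnj u" using h unfolding herm_def u_def by blast
  have key: "2 * t * (Re u ^ 2 + Im u ^ 2) \<le> Re (M$l$l)" for t :: real
  proof -
    have "Re (qf M (tv s l (- (of_real t * u)) 1)) \<ge> 0" using assms(1) psd_qf by blast
    then show ?thesis using False assms(2)
      by (simp add: qf_tv u_def[symmetric] ls algebra_simps power2_eq_square)
  qed
  show ?thesis
  proof (rule ccontr)
    assume "M$s$l \<noteq> 0"
    then have pos: "Re u ^ 2 + Im u ^ 2 > 0" unfolding u_def
      by (simp add: complex_eq_iff sum_power2_gt_zero_iff)
    have "2 * ((\<bar>Re (M$l$l)\<bar> + 1) / (2 * (Re u ^ 2 + Im u ^ 2))) * (Re u ^ 2 + Im u ^ 2) = \<bar>Re (M$l$l)\<bar> + 1"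
      using pos by (simp add: field_simps)
    with key[of "(\<bar>Re (M$l$l)\<bar> + 1) / (2 * (Re u ^ 2 + Im u ^ 2))"] show False by linarith
  qed
qed

lemma psd_zero_diag: assumes "psd M" "\<And>i. M$i$i = 0" shows "M = 0"
  using psd_zero_row[OF assms(1) assms(2)] by (simp add: vec_eq_iff)



lemma qf_proj1: "qf (proj1 v) x = cnj (\<Sum>j\<in>UNIV. cnj (v$j) * x$j) * (\<Sum>j\<in>UNIV. cnj (v$j) * x$j)"
  unfolding qf_def proj1_def by (simp add: sum_product mult_ac)

lemma cnj_mult_self: "cnj w * w = of_real (Re w ^ 2 + Im w ^ 2)"
  by (simp add: complex_eq_iff power2_eq_square)

lemma psd_proj1: "psd (proj1 v)"
  unfolding psd_qf qf_proj1 cnj_mult_self by simp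

lemma qf_diff: "qf (M - N) x = qf M x - qf N x"
  unfolding qf_def by (simp add: algebra_simps sum_subtractf)

lemma qf_add: "qf (M + N) x = qf M x + qf N x"
  unfolding qf_def by (simp add: algebra_simps sum.distrib)

lemma qf_zero: "qf 0 x = 0" unfolding qf_def by simp

lemma psd_add: "psd M \<Longrightarrow> psd N \<Longrightarrow> psd (M + N)"
  unfolding psd_qf qf_add by simp

lemma qf_plus_ev:
  assumes h: "herm X"
  shows "qf X (x + ev s b) = qf X x + b * cnj ((X *v x)$s) + cnj b * (X *v x)$s + cnj b * X$s$s * b"
proof -
  have e1: "(\<Sum>i\<in>UNIV. \<Sum>j\<in>UNIV. cnj (x$i) * X$i$j * ev s b$j) = b * cnj ((X *v x)$s)"
  proof -
    have "(\<Sum>i\<in>UNIV. \<Sum>j\<in>UNIV. cnj (x$i) * X$i$j * ev s b$j) = (\<Sum>i\<in>UNIV. cnj (x$i) * X$i$s * b)"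
      by (rule sum.cong[OF refl], subst sum1[of s], auto simp: ev_def)
    also have "\<dots> = (\<Sum>i\<in>UNIV. cnj (x$i) * cnj (X$s$i) * b)"
      using h unfolding herm_def by metis
    also have "\<dots> = b * cnj ((X *v x)$s)"
      by (simp add: matrix_vector_mult_def sum_distrib_left mult_ac)
    finally show ?thesis .
  qed
  have e2: "(\<Sum>i\<in>UNIV. \<Sum>j\<in>UNIV. cnj (ev s b$i) * X$i$j * x$j) = cnj b * (X *v x)$s"
    by (subst sum1[of s], auto simp: ev_def matrix_vector_mult_def sum_distrib_left mult_ac)
  have "qf X (x + ev s b) = qf X x + (\<Sum>i\<in>UNIV. \<Sum>j\<in>UNIV. cnj (x$i) * X$i$j * ev s b$j)
     + (\<Sum>i\<in>UNIV. \<Sum>j\<in>UNIV. cnj (ev s b$i) * X$i$j * x$j) + qf X (ev s b)"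
    unfolding qf_def by (simp add: algebra_simps sum.distrib)
  then show ?thesis using e1 e2 qf_ev by simp
qed

lemma psd_CS:
  assumes p: "psd X" and d: "Re (X$s$s) > 0"
  shows "Re ((X *v x)$s) ^ 2 + Im ((X *v x)$s) ^ 2 \<le> Re (X$s$s) * Re (qf X x)"
proof -
  define g where "g = (X *v x)$s"
  define dd where "dd = Re (X$s$s)"
  have h: "herm X" using psd_herm p by blast
  have xss: "X$s$s = of_real dd" using h unfolding herm_def dd_def by (metis Reals_cnj_iff complex_is_Real_iff Re_complex_of_real complex_eq_iff Im_complex_of_real)
  have "Re (qf X (x + ev s (- g / of_real dd))) \<ge> 0" using p psd_qf by blast
  also have "Re (qf X (x + ev s (- g / of_real dd))) = Re (qf X x) - (Re g ^ 2 + Im g ^ 2) / dd"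
    unfolding qf_plus_ev[OF h] g_def[symmetric] xss using d dd_def
    by (simp add: power2_eq_square field_simps)
  finally show ?thesis using d unfolding g_def[symmetric] dd_def[symmetric] by (simp add: field_simps)
qed

definition supp :: "complex^'k::finite^'k \<Rightarrow> 'k set \<Rightarrow> bool" where
  "supp X S \<longleftrightarrow> (\<forall>k l. k \<notin> S \<or> l \<notin> S \<longrightarrow> X$k$l = 0)"

lemma V0: "\<exists>(N::nat) \<eta>. (0::complex^'k::finite^'k) = (\<Sum>r<N. proj1 (\<eta> r))"
  apply (rule exI[of _ "0::nat"]) apply (rule exI[of _ "\<lambda>_. 0"]) by simp

lemma decomp_aux:
  fixes S :: "'k::finite set"
  assumes "finite S"
  shows "\<forall>X::complex^'k^'k. psd X \<and> supp X S \<longrightarrow> (\<exists>(N::nat) \<eta>. X = (\<Sum>r<N. proj1 (\<eta> r)))"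
  using assms
proof (induction S rule: finite_induct)
  case empty
  show ?case
  proof (intro allI impI)
    fix X :: "complex^'k^'k" assume "psd X \<and> supp X {}"
    then have "X = 0" unfolding supp_def by (simp add: vec_eq_iff)
    then show "\<exists>(N::nat) \<eta>. X = (\<Sum>r<N. proj1 (\<eta> r))"
      using V0[where 'k='k] by simp
  qed
next
  case (insert s S)
  show ?case
  proof (intro allI impI)
    fix X :: "complex^'k^'k" assume a: "psd X \<and> supp X (insert s S)"
    have p: "psd X" using a by blast
    have h: "herm X" using psd_herm p by blast
    have "Re (qf X (ev s 1)) \<ge> 0" using p psd_qf by blast
    then have nn: "Re (X$s$s) \<ge> 0" by (simp add: qf_ev)
    have "X$s$s = cnj (X$s$s)" using h unfolding herm_def by blast
    then have ims: "Im (X$s$s) = 0" by (simp add: complex_eq_iff)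
    show "\<exists>(N::nat) \<eta>. X = (\<Sum>r<N. proj1 (\<eta> r))"
    proof (cases "Re (X$s$s) = 0")
      case True
      then have z: "X$s$s = 0" using ims by (simp add: complex_eq_iff)
      have row: "X$s$l = 0" for l using psd_zero_row[OF p z] .
      have col: "X$l$s = 0" for l
      proof -
        have "X$l$s = cnj (X$s$l)" using h unfolding herm_def by blast
        then show ?thesis by (simp add: row)
      qed
      have "supp X S"
        unfolding supp_def
      proof (intro allI impI)
        fix k l assume kl: "k \<notin> S \<or> l \<notin> S"
        show "X$k$l = 0"
        proof (cases "k = s \<or> l = s")
          case True then show ?thesis using row col by auto
        next
          case False then show ?thesis using a kl unfolding supp_def by auto
        qed
      qed
      then show ?thesis using insert.IH p by blast
    next
      case False
      then have d: "Re (X$s$s) > 0" using nn by simp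
      define dd where "dd = Re (X$s$s)"
      have xss: "X$s$s = of_real dd" using ims dd_def by (simp add: complex_eq_iff)
      define v :: "complex^'k" where "v = (\<chi> k. X$k$s / of_real (sqrt dd))"
      define X' where "X' = X - proj1 v"
      have w: "(\<Sum>j\<in>UNIV. cnj (v$j) * x$j) = (X *v x)$s / of_real (sqrt dd)" for x
      proof -
        have "(\<Sum>j\<in>UNIV. cnj (v$j) * x$j) = (\<Sum>j\<in>UNIV. X$s$j * x$j / of_real (sqrt dd))"
        proof (rule sum.cong[OF refl])
          fix j
          have "X$s$j = cnj (X$j$s)" using h unfolding herm_def by blast
          then show "cnj (v$j) * x$j = X$s$j * x$j / of_real (sqrt dd)" unfolding v_def by simp
        qed
        then show ?thesis by (simp add: matrix_vector_mult_def sum_divide_distrib)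
      qed
      have pX': "psd X'"
        unfolding psd_qf
      proof
        fix x
        define g where "g = (X *v x)$s"
        define c :: complex where "c = of_real (sqrt dd)"
        have cc: "c * c = of_real dd" unfolding c_def using d dd_def by (simp add: of_real_mult[symmetric] del: of_real_mult)
        have q0: "qf X' x = qf X x - cnj (g / c) * (g / c)"
          unfolding X'_def qf_diff qf_proj1 w g_def c_def by simp
        have "cnj (g / c) * (g / c) = (cnj g * g) / (c * c)" unfolding c_def by simp
        also have "\<dots> = of_real ((Re g ^ 2 + Im g ^ 2) / dd)" unfolding cc cnj_mult_self by simp
        finally have q: "qf X' x = qf X x - of_real ((Re g ^ 2 + Im g ^ 2) / dd)" using q0 by simp
        have "Re g ^ 2 + Im g ^ 2 \<le> dd * Re (qf X x)" using psd_CS[OF p d] g_def dd_def by blast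
        then have "(Re g ^ 2 + Im g ^ 2) / dd \<le> Re (qf X x)" using d dd_def by (simp add: field_simps)
        then show "Im (qf X' x) = 0 \<and> Re (qf X' x) \<ge> 0" using q p psd_qf by auto
      qed
      have sX': "supp X' S"
        unfolding supp_def
      proof (intro allI impI)
        fix k l assume kl: "k \<notin> S \<or> l \<notin> S"
        have sq: "of_real (sqrt dd) * of_real (sqrt dd) = (of_real dd :: complex)"
          using d dd_def by (simp add: of_real_mult[symmetric] del: of_real_mult)
        have sq0: "(of_real (sqrt dd) :: complex) \<noteq> 0" using d dd_def by simp
        show "X'$k$l = 0"
        proof (cases "k = s \<or> l = s")
          case True
          then show ?thesis
          proof
            assume ks: "k = s"
            have hl: "cnj (X$l$s) = X$s$l" using h unfolding herm_def by (metis complex_cnj_cnj)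
            have "X'$k$l = X$s$l - (X$s$s / of_real (sqrt dd)) * cnj (X$l$s / of_real (sqrt dd))"
              unfolding X'_def v_def proj1_def ks by simp
            also have "\<dots> = X$s$l - X$s$l * (of_real dd / (of_real (sqrt dd) * of_real (sqrt dd)))"
              using hl unfolding xss by (simp add: field_simps)
            also have "\<dots> = 0" using sq sq0 by simp
            finally show ?thesis .
          next
            assume ls: "l = s"
            have "X'$k$l = X$k$s - (X$k$s / of_real (sqrt dd)) * cnj (X$s$s / of_real (sqrt dd))"
              unfolding X'_def v_def proj1_def ls by simp
            also have "\<dots> = X$k$s - X$k$s * (of_real dd / (of_real (sqrt dd) * of_real (sqrt dd)))"
              unfolding xss by (simp add: field_simps)
            also have "\<dots> = 0" using sq sq0 by simp
            finally show ?thesis .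
          qed
        next
          case False
          then have "k \<notin> insert s S \<or> l \<notin> insert s S" using kl by auto
          then have "X$k$l = 0" "X$k$s = 0 \<or> X$l$s = 0" using a False unfolding supp_def by auto
          then show ?thesis unfolding X'_def v_def proj1_def by auto
        qed
      qed
      obtain N :: nat and \<eta> where e: "X' = (\<Sum>r<N. proj1 (\<eta> r))" using insert.IH pX' sX' by blast
      have s1: "(\<Sum>r<Suc N. proj1 ((\<eta>(N := v)) r)) = (\<Sum>r<N. proj1 (\<eta> r)) + proj1 v"
        unfolding sum.lessThan_Suc by (auto intro!: sum.cong)
      have "X = (\<Sum>r<Suc N. proj1 ((\<eta>(N := v)) r))"
        unfolding s1 e[symmetric] X'_def by simp
      then show ?thesis by blast
    qed
  qed
qed

lemma decomp: "psd (X::complex^'k::finite^'k) \<Longrightarrow> \<exists>(N::nat) \<eta>. X = (\<Sum>r<N. proj1 (\<eta> r))"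
  using decomp_aux[of "UNIV::'k set"] unfolding supp_def by auto



definition E :: "'k::finite \<Rightarrow> 'k \<Rightarrow> complex^'k^'k" where
  "E k l = (\<chi> a b. if a = k \<and> b = l then 1 else 0)"

definition ch :: "(complex^'m::finite^'m \<Rightarrow> complex^'n::finite^'n) \<Rightarrow> complex^('n\<times>'m)^('n\<times>'m)" where
  "ch \<phi> = (\<chi> p q. \<phi> (E (snd p) (snd q)) $ fst p $ fst q)"

definition mp :: "complex^('n::finite\<times>'m::finite)^('n\<times>'m) \<Rightarrow> complex^'m^'m \<Rightarrow> complex^'n^'n" where
  "mp c X = (\<chi> i j. \<Sum>k\<in>UNIV. \<Sum>l\<in>UNIV. X$k$l * c$(i,k)$(j,l))"

definition bl :: "complex^'p::finite^'p \<Rightarrow> complex^'p^'p \<Rightarrow> complex" where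
  "bl A c = (\<Sum>p\<in>UNIV. \<Sum>q\<in>UNIV. A$p$q * c$p$q)"

lemma sum_pair: "(\<Sum>p\<in>(UNIV::('a::finite\<times>'b::finite) set). f p) = (\<Sum>i\<in>UNIV. \<Sum>k\<in>UNIV. f (i,k))"
  by (simp add: sum.cartesian_product)

lemma lin_zero: "lin_map \<phi> \<Longrightarrow> \<phi> 0 = 0"
  unfolding lin_map_def by (metis add_cancel_right_right add_0)

lemma lin_sum: "lin_map \<phi> \<Longrightarrow> \<phi> (\<Sum>x\<in>S. f x) = (\<Sum>x\<in>S. \<phi> (f x))"
proof (induction S rule: infinite_finite_induct)
  case (infinite A) then show ?case by (simp add: lin_zero)
next
  case empty then show ?case by (simp add: lin_zero)
next
  case (insert x F) then show ?case unfolding lin_map_def by simp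
qed

lemma expand: "X = (\<Sum>k\<in>UNIV. \<Sum>l\<in>UNIV. cmscale (X$k$l) (E k l))"
proof -
  have "(\<Sum>k\<in>UNIV. \<Sum>l\<in>UNIV. cmscale (X$k$l) (E k l))$a$b = X$a$b" for a b
  proof -
    have "(\<Sum>k\<in>UNIV. \<Sum>l\<in>UNIV. cmscale (X$k$l) (E k l))$a$b
       = (\<Sum>k\<in>UNIV. \<Sum>l\<in>UNIV. X$k$l * (if a = k \<and> b = l then 1 else 0))"
      by (simp add: cmscale_def E_def)
    also have "\<dots> = X$a$b"
      by (subst sum1[of a], simp, subst sum1[of b], auto)
    finally show ?thesis .
  qed
  then show ?thesis by (simp add: vec_eq_iff)
qed

lemma lin_mp: assumes "lin_map \<phi>" shows "\<phi> = mp (ch \<phi>)"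
proof
  fix X
  have "\<phi> X = (\<Sum>k\<in>UNIV. \<Sum>l\<in>UNIV. cmscale (X$k$l) (\<phi> (E k l)))"
    by (subst expand[of X], simp add: lin_sum[OF assms]) (use assms in \<open>simp add: lin_map_def\<close>)
  then show "\<phi> X = mp (ch \<phi>) X"
    by (simp add: vec_eq_iff mp_def ch_def cmscale_def)
qed

lemma lin_map_mp: "lin_map (mp c)"
  unfolding lin_map_def mp_def cmscale_def
  by (simp add: vec_eq_iff algebra_simps sum.distrib sum_distrib_left)

lemma ch_mp: "ch (mp c) = c"
proof -
  have "(\<Sum>k\<in>UNIV. \<Sum>l\<in>UNIV. E b d $k$l * c$(a,k)$(e,l)) = c$(a,b)$(e,d)" for a b e d
    by (subst sum1[of b], simp add: E_def, subst sum1[of d], auto simp: E_def)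
  then show ?thesis by (simp add: vec_eq_iff ch_def mp_def)
qed

lemma pair_mp: "pair A (mp c) = bl A c"
  unfolding pair_def bl_def mp_def block_def sum_pair
  apply simp
  apply (rule sum.cong[OF refl])
  apply (rule sum.swap)
  done

lemma pair_lin: "lin_map \<phi> \<Longrightarrow> pair A \<phi> = bl A (ch \<phi>)"
  by (metis lin_mp pair_mp)

definition vcnj :: "complex^'k::finite \<Rightarrow> complex^'k" where "vcnj x = (\<chi> i. cnj (x$i))"

lemma vcnj_vcnj[simp]: "vcnj (vcnj x) = x" by (simp add: vcnj_def vec_eq_iff)

lemma K1: "qf (mp c (proj1 \<eta>)) x = bl (proj1 (prodvec (vcnj x) \<eta>)) c"
proof -
  have "qf (mp c (proj1 \<eta>)) x = (\<Sum>i\<in>UNIV. \<Sum>j\<in>UNIV. \<Sum>k\<in>UNIV. \<Sum>l\<in>UNIV.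
      cnj (x$i) * x$j * \<eta>$k * cnj (\<eta>$l) * c$(i,k)$(j,l))"
    unfolding qf_def mp_def proj1_def
    by (simp add: sum_distrib_left sum_distrib_right mult_ac)
  also have "\<dots> = (\<Sum>i\<in>UNIV. \<Sum>k\<in>UNIV. \<Sum>j\<in>UNIV. \<Sum>l\<in>UNIV.
      cnj (x$i) * x$j * \<eta>$k * cnj (\<eta>$l) * c$(i,k)$(j,l))"
    by (rule sum.cong[OF refl], rule sum.swap)
  also have "\<dots> = bl (proj1 (prodvec (vcnj x) \<eta>)) c"
    unfolding bl_def proj1_def prodvec_def vcnj_def sum_pair
    by (simp add: mult_ac)
  finally show ?thesis .
qed



lemma herm_proj1: "herm (proj1 z)"
  unfolding herm_def proj1_def by simp

lemma hermD: "herm A \<Longrightarrow> cnj (A$p$q) = A$q$p"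
  unfolding herm_def by (metis complex_cnj_cnj)

lemma bl_real: assumes "herm A" "herm c" shows "Im (bl A c) = 0"
proof -
  have "cnj (bl A c) = (\<Sum>p\<in>UNIV. \<Sum>q\<in>UNIV. A$q$p * c$q$p)"
    unfolding bl_def by (simp add: hermD[OF assms(1)] hermD[OF assms(2)])
  also have "\<dots> = bl A c" unfolding bl_def by (rule sum.swap)
  finally show ?thesis by (metis Reals_cnj_iff complex_is_Real_iff)
qed

lemma qf_sum: "qf (\<Sum>r\<in>S. M r) x = (\<Sum>r\<in>S. qf (M r) x)"
  by (induction S rule: infinite_finite_induct) (auto simp: qf_zero qf_add)

lemma mp_sum: "mp c (\<Sum>r\<in>S. X r) = (\<Sum>r\<in>S. mp c (X r))"
  by (rule lin_sum[OF lin_map_mp])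

lemma Pc_herm:
  fixes c :: "complex^('n::finite\<times>'m::finite)^('n\<times>'m)"
  assumes P: "mp c \<in> P1"
  shows "herm c"
proof -
  have M: "c$(j,k)$(i,l) = cnj (c$(i,l)$(j,k))" for i j k l
  proof -
    define M1 :: "complex^'m^'m" where "M1 = (\<chi> k l. c$(j,k)$(i,l))"
    define M2 :: "complex^'m^'m" where "M2 = (\<chi> k l. cnj (c$(i,l)$(j,k)))"
    have "qf (M1 - M2) y = 0" for y
    proof -
      define \<eta> where "\<eta> = vcnj y"
      have "psd (mp c (proj1 \<eta>))" using P psd_proj1 unfolding P1_def by blast
      then have h: "(mp c (proj1 \<eta>))$j$i = cnj ((mp c (proj1 \<eta>))$i$j)"
        using psd_herm unfolding herm_def by blast
      have e1: "qf M1 y = (mp c (proj1 \<eta>))$j$i"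
        unfolding qf_def M1_def mp_def proj1_def \<eta>_def vcnj_def by (simp add: mult_ac)
      have "qf M2 y = (\<Sum>k\<in>UNIV. \<Sum>l\<in>UNIV. cnj (\<eta>$l) * \<eta>$k * cnj (c$(i,l)$(j,k)))"
        unfolding qf_def M2_def \<eta>_def vcnj_def by (simp add: mult_ac)
      also have "\<dots> = (\<Sum>l\<in>UNIV. \<Sum>k\<in>UNIV. cnj (\<eta>$l) * \<eta>$k * cnj (c$(i,l)$(j,k)))"
        by (rule sum.swap)
      also have "\<dots> = cnj ((mp c (proj1 \<eta>))$i$j)"
        unfolding mp_def proj1_def by (simp add: mult_ac)
      finally have e2: "qf M2 y = cnj ((mp c (proj1 \<eta>))$i$j)" .
      show ?thesis unfolding qf_diff e1 e2 h by simp
    qed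
    then have "M1 - M2 = 0" by (rule pol)
    then have "M1$k$l = M2$k$l" by (simp add: vec_eq_iff)
    then show ?thesis unfolding M1_def M2_def by simp
  qed
  show ?thesis unfolding herm_def
  proof (intro allI)
    fix p q :: "'n \<times> 'm"
    show "c$q$p = cnj (c$p$q)" using M[of "fst q" "snd q" "fst p" "snd p"] by simp
  qed
qed

lemma Pc_char:
  "mp c \<in> P1 \<longleftrightarrow> herm c \<and> (\<forall>\<xi> \<eta>. Re (bl (proj1 (prodvec \<xi> \<eta>)) c) \<ge> 0)"
proof
  assume P: "mp c \<in> P1"
  have "Re (bl (proj1 (prodvec \<xi> \<eta>)) c) \<ge> 0" for \<xi> \<eta>
  proof -
    have "psd (mp c (proj1 \<eta>))" using P psd_proj1 unfolding P1_def by blast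
    then have "Re (qf (mp c (proj1 \<eta>)) (vcnj \<xi>)) \<ge> 0" unfolding psd_qf by blast
    then show ?thesis unfolding K1 by simp
  qed
  then show "herm c \<and> (\<forall>\<xi> \<eta>. Re (bl (proj1 (prodvec \<xi> \<eta>)) c) \<ge> 0)"
    using Pc_herm[OF P] by blast
next
  assume a: "herm c \<and> (\<forall>\<xi> \<eta>. Re (bl (proj1 (prodvec \<xi> \<eta>)) c) \<ge> 0)"
  have "psd (mp c X)" if pX: "psd X" for X
  proof -
    obtain N :: nat and \<eta> where X: "X = (\<Sum>r<N. proj1 (\<eta> r))" using decomp[OF pX] by blast
    show ?thesis
      unfolding psd_qf
    proof
      fix x
      have q: "qf (mp c X) x = (\<Sum>r<N. bl (proj1 (prodvec (vcnj x) (\<eta> r))) c)"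
        unfolding X mp_sum qf_sum K1 ..
      have "Im (bl (proj1 (prodvec (vcnj x) (\<eta> r))) c) = 0" for r
        using bl_real herm_proj1 a by blast
      moreover have "Re (bl (proj1 (prodvec (vcnj x) (\<eta> r))) c) \<ge> 0" for r
        using a by blast
      ultimately show "Im (qf (mp c X) x) = 0 \<and> Re (qf (mp c X) x) \<ge> 0"
        unfolding q by (simp add: Im_sum Re_sum sum_nonneg)
    qed
  qed
  then show "mp c \<in> P1" unfolding P1_def using lin_map_mp by blast
qed



lemma V1_0: "0 \<in> V1"
  unfolding V1_def by (rule CollectI, rule exI[of _ "0::nat"]) simp

lemma V1_proj: "proj1 (prodvec \<xi> \<eta>) \<in> V1"
  unfolding V1_def
  by (rule CollectI, rule exI[of _ "1::nat"], rule exI[of _ "\<lambda>_. \<xi>"], rule exI[of _ "\<lambda>_. \<eta>"]) simp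

lemma V1_sum: "(\<Sum>r<(N::nat). proj1 (prodvec (\<xi>s r) (\<eta>s r))) \<in> V1"
  unfolding V1_def by blast

lemma V1_add1: assumes "A \<in> V1" shows "A + proj1 (prodvec \<xi> \<eta>) \<in> V1"
proof -
  obtain N :: nat and \<xi>s \<eta>s where A: "A = (\<Sum>r<N. proj1 (prodvec (\<xi>s r) (\<eta>s r)))"
    using assms unfolding V1_def by blast
  have "A + proj1 (prodvec \<xi> \<eta>) = (\<Sum>r<Suc N. proj1 (prodvec ((\<xi>s(N := \<xi>)) r) ((\<eta>s(N := \<eta>)) r)))"
    unfolding sum.lessThan_Suc A by (auto intro!: sum.cong)
  then show ?thesis by (simp only: V1_sum)
qed

lemma V1_add: assumes "A \<in> V1" "B \<in> V1" shows "A + B \<in> V1"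
proof -
  obtain N :: nat and \<xi>s \<eta>s where B: "B = (\<Sum>r<N. proj1 (prodvec (\<xi>s r) (\<eta>s r)))"
    using assms(2) unfolding V1_def by blast
  have "A + (\<Sum>r<n. proj1 (prodvec (\<xi>s r) (\<eta>s r))) \<in> V1" for n
  proof (induction n)
    case 0 then show ?case using assms(1) by simp
  next
    case (Suc n)
    then show ?case using V1_add1[OF Suc] by (simp add: sum.lessThan_Suc add.assoc)
  qed
  then show ?thesis using B by simp
qed

lemma prodvec_scale: "prodvec (a *\<^sub>R \<xi>) (b *\<^sub>R \<eta>) = (a * b) *\<^sub>R prodvec \<xi> \<eta>"
  unfolding prodvec_def by (simp add: vec_eq_iff)

lemma proj1_scale: "proj1 (a *\<^sub>R z) = (a * a) *\<^sub>R proj1 z"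
  unfolding proj1_def by (simp add: vec_eq_iff)

lemma V1_scale: assumes "A \<in> V1" "t \<ge> 0" shows "t *\<^sub>R A \<in> V1"
proof -
  obtain N :: nat and \<xi>s \<eta>s where A: "A = (\<Sum>r<N. proj1 (prodvec (\<xi>s r) (\<eta>s r)))"
    using assms unfolding V1_def by blast
  have "t *\<^sub>R A = (\<Sum>r<N. proj1 (prodvec (sqrt t *\<^sub>R \<xi>s r) (1 *\<^sub>R \<eta>s r)))"
    unfolding A scaleR_sum_right prodvec_scale proj1_scale using assms(2) by simp
  then show ?thesis by (simp only: V1_sum)
qed

lemma convex_V1: "convex V1"
  unfolding convex_def using V1_add V1_scale by blast

lemma conic_V1: "conic V1"
  unfolding conic_def using V1_scale by blast

definition S0 :: "(complex^('n::finite \<times> 'm::finite)^('n \<times> 'm)) set" where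
  "S0 = (\<lambda>(\<xi>,\<eta>). proj1 (prodvec \<xi> \<eta>)) ` (sphere 0 1 \<times> sphere 0 1)"

lemma compact_S0: "compact S0"
  unfolding S0_def
proof (rule compact_continuous_image)
  show "compact (sphere (0::complex^'n) 1 \<times> sphere (0::complex^'m) 1)"
    by (intro compact_Times compact_sphere)
  show "continuous_on (sphere 0 1 \<times> sphere 0 1) (\<lambda>(\<xi>::complex^'n, \<eta>::complex^'m). proj1 (prodvec \<xi> \<eta>))"
    unfolding proj1_def prodvec_def case_prod_beta
    by (intro continuous_intros)
qed

lemma inner_self_vec: "inner (z::complex^'k::finite) z = (\<Sum>p\<in>UNIV. Re (z$p * cnj (z$p)))"
  unfolding inner_vec_def inner_complex_def by (simp add: power2_eq_square)

lemma norm_prodvec: "norm (prodvec \<xi> \<eta>) ^ 2 = norm \<xi> ^ 2 * norm \<eta> ^ 2"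
proof -
  have "norm (prodvec \<xi> \<eta>) ^ 2 = (\<Sum>p\<in>UNIV. Re (prodvec \<xi> \<eta> $ p * cnj (prodvec \<xi> \<eta> $ p)))"
    by (simp add: power2_norm_eq_inner inner_self_vec)
  also have "\<dots> = (\<Sum>i\<in>UNIV. \<Sum>k\<in>UNIV. Re (\<xi>$i * cnj (\<xi>$i)) * Re (\<eta>$k * cnj (\<eta>$k)))"
    unfolding sum_pair prodvec_def by (simp add: algebra_simps)
  also have "\<dots> = norm \<xi> ^ 2 * norm \<eta> ^ 2"
    by (simp add: power2_norm_eq_inner inner_self_vec sum_product)
  finally show ?thesis .
qed

lemma trace_proj1: "inner (mat 1) (proj1 z) = norm z ^ 2"
proof -
  have "inner (mat 1) (proj1 z) = (\<Sum>p\<in>UNIV. \<Sum>q\<in>UNIV. inner (mat 1 $ p $ q) (proj1 z $ p $ q))"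
    unfolding inner_vec_def ..
  also have "\<dots> = (\<Sum>p\<in>UNIV. Re (z$p * cnj (z$p)))"
    by (rule sum.cong[OF refl], subst sum1, auto simp: mat_def proj1_def inner_complex_def)
  finally show ?thesis by (simp add: power2_norm_eq_inner inner_self_vec)
qed

lemma S0_sub: "S0 \<subseteq> {x. inner (mat 1) x = 1}"
  unfolding S0_def by (auto simp: trace_proj1 norm_prodvec)

lemma zero_notin: "(0::complex^('n::finite \<times> 'm::finite)^('n \<times> 'm)) \<notin> convex hull S0"
proof -
  have "convex hull (S0::(complex^('n \<times> 'm)^('n \<times> 'm)) set) \<subseteq> {x. inner (mat 1) x = 1}"
    by (rule hull_minimal[OF S0_sub]) (rule convex_hyperplane)
  then show ?thesis by auto
qed

lemma V1_hull: "V1 = convex_cone hull S0"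
proof
  show "convex_cone hull S0 \<subseteq> V1"
  proof (rule hull_minimal)
    show "S0 \<subseteq> V1" unfolding S0_def using V1_proj by auto
    show "convex_cone V1" unfolding convex_cone_def using V1_0 convex_V1 conic_V1 by blast
  qed
next
  show "V1 \<subseteq> convex_cone hull S0"
  proof
    fix A assume "A \<in> V1"
    then obtain N :: nat and \<xi>s \<eta>s where A: "A = (\<Sum>r<N. proj1 (prodvec (\<xi>s r) (\<eta>s r)))"
      unfolding V1_def by blast
    have tm: "proj1 (prodvec \<xi> \<eta>) \<in> convex_cone hull S0" for \<xi> \<eta>
    proof (cases "\<xi> = 0 \<or> \<eta> = 0")
      case True
      then have "proj1 (prodvec \<xi> \<eta>) = 0" unfolding proj1_def prodvec_def by (auto simp: vec_eq_iff)
      then show ?thesis using convex_cone_hull_contains_0 by simp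
    next
      case False
      define a where "a = norm \<xi>" define b where "b = norm \<eta>"
      have ab: "a > 0" "b > 0" using False a_def b_def by auto
      have "proj1 (prodvec ((1/a) *\<^sub>R \<xi>) ((1/b) *\<^sub>R \<eta>)) \<in> S0"
        unfolding S0_def using ab a_def b_def by (auto intro!: image_eqI[where x="((1/a) *\<^sub>R \<xi>, (1/b) *\<^sub>R \<eta>)"])
      then have "proj1 (prodvec ((1/a) *\<^sub>R \<xi>) ((1/b) *\<^sub>R \<eta>)) \<in> convex_cone hull S0" by (rule hull_inc)
      then have "((a*b)*(a*b)) *\<^sub>R proj1 (prodvec ((1/a) *\<^sub>R \<xi>) ((1/b) *\<^sub>R \<eta>)) \<in> convex_cone hull S0"
        by (rule convex_cone_hull_mul) simp
      moreover have "((a*b)*(a*b)) *\<^sub>R proj1 (prodvec ((1/a) *\<^sub>R \<xi>) ((1/b) *\<^sub>R \<eta>)) = proj1 (prodvec \<xi> \<eta>)"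
        unfolding prodvec_scale proj1_scale using ab by simp
      ultimately show ?thesis by simp
    qed
    have "(\<Sum>r<n. proj1 (prodvec (\<xi>s r) (\<eta>s r))) \<in> convex_cone hull S0" for n
    proof (induction n)
      case 0 then show ?case using convex_cone_hull_contains_0 by simp
    next
      case (Suc n) then show ?case unfolding sum.lessThan_Suc by (rule convex_cone_hull_add[OF _ tm])
    qed
    then show "A \<in> convex_cone hull S0" using A by simp
  qed
qed

lemma closed_V1: "closed (V1::(complex^('n::finite \<times> 'm::finite)^('n \<times> 'm)) set)"
proof -
  have "closed (conic hull (convex hull (S0::(complex^('n \<times> 'm)^('n \<times> 'm)) set)))"
    by (rule closed_conic_hull) (use compact_convex_hull[OF compact_S0] zero_notin in blast)
  then show ?thesis unfolding V1_hull convex_cone_hull_separate by simp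
qed



definition cj :: "complex^'k::finite^'k \<Rightarrow> complex^'k^'k" where
  "cj M = (\<chi> p q. cnj (M$p$q))"

definition hs :: "complex^'k::finite^'k \<Rightarrow> complex^'k^'k" where
  "hs M = (\<chi> p q. (M$p$q + cnj (M$q$p)) / 2)"

lemma Re_bl_cj: "Re (bl x (cj a)) = inner a x"
  unfolding bl_def cj_def inner_vec_def inner_complex_def by (simp add: Re_sum algebra_simps)

lemma Re_bl: "Re (bl B c) = inner (cj B) c"
  unfolding bl_def cj_def inner_vec_def inner_complex_def by (simp add: Re_sum algebra_simps)

lemma herm_hs: "herm (hs M)"
  unfolding herm_def hs_def by (simp add: add.commute)

lemma Re_bl_hs: assumes "herm x" shows "Re (bl x (hs M)) = Re (bl x M)"
proof -
  have "(\<Sum>p\<in>UNIV. \<Sum>q\<in>UNIV. x$p$q * cnj (M$q$p)) = (\<Sum>p\<in>UNIV. \<Sum>q\<in>UNIV. cnj (x$q$p * M$q$p))"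
    by (rule sum.cong[OF refl], rule sum.cong[OF refl]) (simp add: hermD[OF assms])
  also have "\<dots> = (\<Sum>q\<in>UNIV. \<Sum>p\<in>UNIV. cnj (x$q$p * M$q$p))"
    by (rule sum.swap)
  also have "\<dots> = cnj (\<Sum>q\<in>UNIV. \<Sum>p\<in>UNIV. x$q$p * M$q$p)"
    by simp
  also have "\<dots> = cnj (bl x M)" unfolding bl_def ..
  finally have e: "(\<Sum>p\<in>UNIV. \<Sum>q\<in>UNIV. x$p$q * cnj (M$q$p)) = cnj (bl x M)" .
  have "2 * bl x (hs M) = (\<Sum>p\<in>UNIV. \<Sum>q\<in>UNIV. x$p$q * M$p$q + x$p$q * cnj (M$q$p))"
    unfolding bl_def hs_def sum_distrib_left
    by (rule sum.cong[OF refl], rule sum.cong[OF refl]) (simp add: field_simps)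
  also have "\<dots> = bl x M + (\<Sum>p\<in>UNIV. \<Sum>q\<in>UNIV. x$p$q * cnj (M$q$p))"
    unfolding bl_def by (simp add: sum.distrib)
  finally have eq: "2 * bl x (hs M) = bl x M + cnj (bl x M)" unfolding e .
  have "Re (2 * bl x (hs M)) = Re (bl x M + cnj (bl x M))" using eq by simp
  then show ?thesis by simp
qed

lemma bl_add1: "bl (A + B) c = bl A c + bl B c"
  unfolding bl_def by (simp add: algebra_simps sum.distrib)

lemma scaleR_comp: "(t *\<^sub>R c)$p$q = of_real t * (c$p$q::complex)"
  by (simp only: vector_scaleR_component) (simp add: scaleR_conv_of_real)

lemma bl_scale2: "bl A (t *\<^sub>R c) = of_real t * bl A c"
  unfolding bl_def scaleR_comp by (simp add: sum_distrib_left mult_ac)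

lemma bl_zero: "bl 0 c = 0" by (simp add: bl_def)

lemma bl_sum1: "bl (\<Sum>r\<in>S. A r) c = (\<Sum>r\<in>S. bl (A r) c)"
  by (induction S rule: infinite_finite_induct) (auto simp: bl_add1 bl_zero)

lemma bl_V1: assumes "A \<in> V1" "mp c \<in> P1" shows "Re (bl A c) \<ge> 0"
proof -
  obtain N :: nat and \<xi>s \<eta>s where A: "A = (\<Sum>r<N. proj1 (prodvec (\<xi>s r) (\<eta>s r)))"
    using assms unfolding V1_def by blast
  show ?thesis unfolding A bl_sum1 Re_sum
    using assms(2) unfolding Pc_char by (auto intro!: sum_nonneg)
qed

lemma Pc_scale: assumes "mp c \<in> P1" "t \<ge> 0" shows "mp (t *\<^sub>R c) \<in> P1"
proof -
  have hc: "herm c" using assms Pc_char by blast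
  have "herm (t *\<^sub>R c)" unfolding herm_def scaleR_comp by (simp add: hermD[OF hc])
  moreover have "Re (bl (proj1 (prodvec \<xi> \<eta>)) (t *\<^sub>R c)) \<ge> 0" for \<xi> \<eta>
    using assms unfolding bl_scale2 Pc_char by simp
  ultimately show ?thesis unfolding Pc_char by blast
qed

lemma closed_herm: "closed {c::complex^'k::finite^'k. herm c}"
proof -
  have "{c::complex^'k^'k. herm c} = (\<Inter>p. \<Inter>q. {c. c$q$p - cnj (c$p$q) = 0})"
    unfolding herm_def by auto
  also have "closed \<dots>"
    by (intro closed_INT ballI closed_Collect_eq continuous_intros)
  finally show ?thesis .
qed

lemma closed_Pc: "closed {c::complex^('n::finite \<times> 'm::finite)^('n \<times> 'm). mp c \<in> P1}"
proof -
  have "{c::complex^('n \<times> 'm)^('n \<times> 'm). mp c \<in> P1} = {c. herm c} \<inter>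
     (\<Inter>\<xi>. \<Inter>\<eta>. {c. inner (cj (proj1 (prodvec \<xi> \<eta>))) c \<ge> 0})"
    unfolding Pc_char Re_bl by auto
  also have "closed \<dots>"
    by (intro closed_Int closed_herm closed_INT ballI closed_halfspace_ge)
  finally show ?thesis .
qed

lemma sep:
  fixes X :: "complex^('n::finite \<times> 'm::finite)^('n \<times> 'm)"
  assumes hX: "herm X" and nX: "X \<notin> V1"
  shows "\<exists>c. mp c \<in> P1 \<and> Re (bl X c) < 0"
proof -
  obtain a b where ab: "inner a X < b" "\<forall>x\<in>V1. inner a x > b"
    using separating_hyperplane_closed_point[OF convex_V1 closed_V1 nX] by blast
  have b0: "b < 0" using ab(2) V1_0 by force
  have nn: "inner a x \<ge> 0" if xV: "x \<in> V1" for x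
  proof (rule ccontr)
    assume "\<not> inner a x \<ge> 0"
    then have neg: "inner a x < 0" by simp
    define t where "t = b / inner a x"
    have "t \<ge> 0" using b0 neg unfolding t_def by (simp add: divide_nonpos_neg)
    then have "t *\<^sub>R x \<in> V1" using V1_scale xV by blast
    then have "inner a (t *\<^sub>R x) > b" using ab(2) by blast
    moreover have "inner a (t *\<^sub>R x) = b" using neg by (simp add: t_def)
    ultimately show False by simp
  qed
  define c where "c = hs (cj a)"
  have hc: "herm c" unfolding c_def by (rule herm_hs)
  have r: "Re (bl x c) = inner a x" if "herm x" for x
    unfolding c_def Re_bl_hs[OF that] Re_bl_cj ..
  have "Re (bl (proj1 (prodvec \<xi> \<eta>)) c) \<ge> 0" for \<xi> \<eta>
    unfolding r[OF herm_proj1] using nn[OF V1_proj] .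
  then have "mp c \<in> P1" unfolding Pc_char using hc by blast
  moreover have "Re (bl X c) < 0" using r[OF hX] ab(1) b0 by simp
  ultimately show ?thesis by blast
qed



definition trc :: "complex^('n::finite\<times>'m::finite)^('n\<times>'m) \<Rightarrow> real" where
  "trc c = inner (mat 1) c"

lemma trc_sum: "trc c = (\<Sum>p\<in>UNIV. Re (c$p$p))"
proof -
  have "trc c = (\<Sum>p\<in>UNIV. \<Sum>q\<in>UNIV. inner (mat 1 $ p $ q) (c $ p $ q))"
    unfolding trc_def inner_vec_def ..
  also have "\<dots> = (\<Sum>p\<in>UNIV. Re (c$p$p))"
    by (rule sum.cong[OF refl], subst sum1, auto simp: mat_def inner_complex_def)
  finally show ?thesis .
qed

lemma G: "(mp c (proj1 \<eta>))$i$j = qf (\<chi> k l. c$(i,k)$(j,l)) (vcnj \<eta>)"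
  unfolding mp_def proj1_def qf_def vcnj_def by (simp add: mult_ac)

lemma Pc_diag: assumes "mp c \<in> P1" shows "psd (\<chi> k l. c$(i,k)$(i,l))"
  unfolding psd_qf
proof
  fix y
  have "psd (mp c (proj1 (vcnj y)))" using assms psd_proj1 unfolding P1_def by blast
  then have "Im (qf (mp c (proj1 (vcnj y))) (ev i 1)) = 0 \<and> Re (qf (mp c (proj1 (vcnj y))) (ev i 1)) \<ge> 0"
    unfolding psd_qf by blast
  moreover have "qf (mp c (proj1 (vcnj y))) (ev i 1) = qf (\<chi> k l. c$(i,k)$(i,l)) y"
    unfolding qf_ev G by simp
  ultimately show "Im (qf (\<chi> k l. c$(i,k)$(i,l)) y) = 0 \<and> Re (qf (\<chi> k l. c$(i,k)$(i,l)) y) \<ge> 0"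
    by simp
qed

lemma Pc_diag_entry: assumes "mp c \<in> P1"
  shows "Im (c$(i,k)$(i,k)) = 0 \<and> Re (c$(i,k)$(i,k)) \<ge> 0"
proof -
  have "Im (qf (\<chi> k l. c$(i,k)$(i,l)) (ev k 1)) = 0 \<and> Re (qf (\<chi> k l. c$(i,k)$(i,l)) (ev k 1)) \<ge> 0"
    using Pc_diag[OF assms] unfolding psd_qf by blast
  then show ?thesis unfolding qf_ev by simp
qed

lemma trc_nonneg: "mp c \<in> P1 \<Longrightarrow> trc c \<ge> 0"
  unfolding trc_sum sum_pair using Pc_diag_entry by (auto intro!: sum_nonneg)

lemma Pc_trc_zero:
  fixes c :: "complex^('n::finite\<times>'m::finite)^('n\<times>'m)"
  assumes P: "mp c \<in> P1" and t: "trc c = 0"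
  shows "c = 0"
proof -
  have z: "Re (c$(i,k)$(i,k)) = 0" for i k
  proof -
    have "(\<Sum>i\<in>UNIV. \<Sum>k\<in>UNIV. Re (c$(i,k)$(i,k))) = 0" using t unfolding trc_sum sum_pair .
    moreover have "\<forall>i\<in>UNIV. (\<Sum>k\<in>UNIV. Re (c$(i,k)$(i,k))) \<ge> 0" using Pc_diag_entry[OF P] by (auto intro!: sum_nonneg)
    ultimately have "(\<Sum>k\<in>UNIV. Re (c$(i,k)$(i,k))) = 0" by (simp add: sum_nonneg_eq_0_iff)
    moreover have "\<forall>k\<in>UNIV. Re (c$(i,k)$(i,k)) \<ge> 0" using Pc_diag_entry[OF P] by blast
    ultimately show ?thesis by (simp add: sum_nonneg_eq_0_iff)
  qed
  have D0: "(\<chi> k l. c$(i,k)$(i,l)) = (0::complex^'m^'m)" for i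
  proof (rule psd_zero_diag[OF Pc_diag[OF P]])
    fix k
    show "(\<chi> k l. c$(i,k)$(i,l)) $ k $ k = 0"
      using z[of i k] Pc_diag_entry[OF P, of i k] by (simp add: complex_eq_iff)
  qed
  have M0: "mp c (proj1 \<eta>) = 0" for \<eta>
  proof (rule psd_zero_diag)
    show "psd (mp c (proj1 \<eta>))" using P psd_proj1 unfolding P1_def by blast
    fix i
    show "mp c (proj1 \<eta>) $ i $ i = 0" unfolding G D0 by (simp add: qf_zero)
  qed
  have F0: "(\<chi> k l. c$(i,k)$(j,l)) = (0::complex^'m^'m)" for i j
  proof (rule pol)
    fix y
    have "qf (\<chi> k l. c$(i,k)$(j,l)) y = (mp c (proj1 (vcnj y)))$i$j" unfolding G by simp
    then show "qf (\<chi> k l. c$(i,k)$(j,l)) y = 0" unfolding M0 by simp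
  qed
  show ?thesis
  proof (rule iffD2[OF vec_eq_iff], intro allI)
    fix p
    show "c$p = 0$p"
    proof (rule iffD2[OF vec_eq_iff], intro allI)
      fix q
      have "(\<chi> k l. c$(fst p,k)$(fst q,l)) $ snd p $ snd q = (0::complex^'m^'m) $ snd p $ snd q"
        unfolding F0 ..
      then show "c$p$q = 0$p$q" by simp
    qed
  qed
qed

lemma delta: "\<exists>\<delta>>0. \<forall>c::complex^('n::finite\<times>'m::finite)^('n\<times>'m). mp c \<in> P1 \<longrightarrow> trc c \<ge> \<delta> * norm c"
proof -
  define T where "T = {c::complex^('n\<times>'m)^('n\<times>'m). mp c \<in> P1} \<inter> sphere 0 1"
  have cT: "compact T" unfolding T_def by (intro closed_Int_compact closed_Pc compact_sphere)
  have inT: "(1 / norm c) *\<^sub>R c \<in> T" if "mp c \<in> P1" "c \<noteq> 0" for c :: "complex^('n\<times>'m)^('n\<times>'m)"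
    unfolding T_def using Pc_scale[OF that(1)] that(2) by simp
  have trc_scale: "trc (t *\<^sub>R c) = t * trc c" for t and c :: "complex^('n\<times>'m)^('n\<times>'m)" unfolding trc_def by simp
  show ?thesis
  proof (cases "T = {}")
    case True
    then have z: "mp c \<in> P1 \<Longrightarrow> c = 0" for c :: "complex^('n\<times>'m)^('n\<times>'m)" using inT by blast
    have "\<forall>c::complex^('n\<times>'m)^('n\<times>'m). mp c \<in> P1 \<longrightarrow> trc c \<ge> 1 * norm c"
    proof (intro allI impI)
      fix c :: "complex^('n\<times>'m)^('n\<times>'m)" assume "mp c \<in> P1"
      then have "c = 0" by (rule z)
      then show "trc c \<ge> 1 * norm c" by (simp add: trc_def)
    qed
    then show ?thesis by (intro exI[of _ 1]) auto
  next
    case False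
    have "continuous_on T trc" unfolding trc_def by (intro continuous_intros)
    then obtain c0 where c0: "c0 \<in> T" "\<forall>c\<in>T. trc c0 \<le> trc c"
      using continuous_attains_inf[OF cT False] by blast
    have P0: "mp c0 \<in> P1" "c0 \<noteq> 0" using c0(1) unfolding T_def by auto
    have pos: "trc c0 > 0" using trc_nonneg[OF P0(1)] Pc_trc_zero[OF P0(1)] P0(2) by force
    have "trc c \<ge> trc c0 * norm c" if "mp c \<in> P1" for c :: "complex^('n\<times>'m)^('n\<times>'m)"
    proof (cases "c = 0")
      case True then show ?thesis by (simp add: trc_def)
    next
      case False
      have "trc c0 \<le> trc ((1 / norm c) *\<^sub>R c)" using c0(2) inT[OF that False] by blast
      also have "\<dots> = trc c / norm c" unfolding trc_scale by simp
      finally show ?thesis using False by (simp add: field_simps)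
    qed
    then show ?thesis using pos by blast
  qed
qed



lemma bl_comm: "bl A c = bl c A"
  unfolding bl_def by (simp add: mult.commute)

lemma ray_mp: "(\<lambda>X. cmscale (complex_of_real t) (mp c X)) = mp (t *\<^sub>R c)"
  unfolding mp_def cmscale_def by (simp add: vec_eq_iff scaleR_comp sum_distrib_left mult_ac) (simp add: scaleR_conv_of_real mult_ac)

lemma ch_zero: "ch (\<lambda>X. 0) = 0"
  unfolding ch_def by (simp add: vec_eq_iff)

lemma nsq: "norm (x + y) ^ 2 = norm x ^ 2 + 2 * inner x y + norm (y::'a::real_inner) ^ 2"
  by (simp add: power2_norm_eq_inner inner_add inner_commute)

lemma pair_ray: "pair B (mp (t *\<^sub>R c)) = of_real t * bl B c"
  unfolding pair_mp bl_scale2 ..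

lemma easy_dir:
  assumes "A \<in> V1" "\<phi> \<in> P1" shows "Re (pair A \<phi>) \<ge> 0"
proof -
  have l: "lin_map \<phi>" using assms(2) unfolding P1_def by blast
  have "mp (ch \<phi>) \<in> P1" using assms(2) lin_mp[OF l] by simp
  then show ?thesis unfolding pair_lin[OF l] using bl_V1 assms(1) by blast
qed

lemma ray_eq: "ray (mp c) = {mp (t *\<^sub>R c) | t. t \<ge> 0}"
  unfolding ray_def ray_mp ..

lemma hard_dir:
  fixes A :: "complex^('n::finite \<times> 'm::finite)^('n \<times> 'm)"
  assumes pA: "psd A" and nA: "A \<notin> V1"
  shows "\<exists>\<phi> :: complex^'m^'m \<Rightarrow> complex^'n^'n. exposed_map \<phi> \<and> pair A \<phi> \<in> \<real> \<and> Re (pair A \<phi>) < 0"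
proof -
  have hA: "herm A" using psd_herm pA by blast
  obtain c1 where c1: "mp c1 \<in> P1" "Re (bl A c1) < 0" using sep[OF hA nA] by blast
  define a where "a = cj A"
  have ra: "Re (bl A c) = inner a c" for c unfolding a_def Re_bl ..
  obtain \<delta> where \<delta>: "\<delta> > 0" "\<forall>c::complex^('n\<times>'m)^('n\<times>'m). mp c \<in> P1 \<longrightarrow> trc c \<ge> \<delta> * norm c"
    using delta by blast
  have trc_scale: "trc (t *\<^sub>R c) = t * trc c" for t and c :: "complex^('n\<times>'m)^('n\<times>'m)"
    unfolding trc_def by simp
  have tpos: "trc c > 0" if "mp c \<in> P1" "c \<noteq> 0" for c :: "complex^('n\<times>'m)^('n\<times>'m)"
  proof -
    have "\<delta> * norm c > 0" using \<delta>(1) that(2) by simp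
    then show ?thesis using \<delta>(2) that(1) by fastforce
  qed
  have c1nz: "c1 \<noteq> 0" using c1(2) by (auto simp: bl_def)
  define c1' where "c1' = (1 / trc c1) *\<^sub>R c1"
  have t1: "trc c1 > 0" using tpos[OF c1(1) c1nz] .
  have c1'P: "mp c1' \<in> P1" unfolding c1'_def using Pc_scale[OF c1(1)] t1 by simp
  have c1't: "trc c1' = 1" unfolding c1'_def trc_scale using t1 by simp
  define m where "m = inner a c1'"
  have "inner a c1 < 0" using c1(2) ra by simp
  moreover have "m = inner a c1 / trc c1" unfolding m_def c1'_def by simp
  ultimately have m0: "m < 0" using t1 by (simp add: divide_neg_pos)
  define Bs where "Bs = {c::complex^('n\<times>'m)^('n\<times>'m). mp c \<in> P1} \<inter> {c. inner (mat 1) c = 1}"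
  have Bs_iff: "c \<in> Bs \<longleftrightarrow> mp c \<in> P1 \<and> trc c = 1" for c unfolding Bs_def trc_def by simp
  define R where "R = 1 / \<delta>"
  have Rb: "norm c \<le> R" if "c \<in> Bs" for c
  proof -
    have "\<delta> * norm c \<le> 1" using \<delta>(2) that unfolding Bs_iff by force
    then show ?thesis unfolding R_def using \<delta>(1) by (simp add: field_simps)
  qed
  have cBs: "compact Bs"
  proof (rule iffD2[OF compact_eq_bounded_closed], rule conjI)
    show "bounded Bs" by (rule bounded_subset[OF bounded_cball[of 0 R]]) (use Rb in auto)
    show "closed Bs" unfolding Bs_def by (intro closed_Int closed_Pc closed_hyperplane)
  qed
  have c1'B: "c1' \<in> Bs" using c1'P c1't Bs_iff by blast
  then have neB: "Bs \<noteq> {}" by blast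
  define t where "t = R^2 / (- m) + 1"
  have "R^2 / (- m) \<ge> 0" using m0 by (intro divide_nonneg_pos) auto
  then have tp: "t > 0" unfolding t_def by linarith
  have tm: "R^2 \<le> - (t * m)"
  proof -
    have "- (t * m) = R^2 + (- m)" unfolding t_def using m0 by (simp add: field_simps)
    then show ?thesis using m0 by simp
  qed
  define p where "p = t *\<^sub>R a"
  define f where "f c = norm (c - p) ^ 2" for c :: "complex^('n\<times>'m)^('n\<times>'m)"
  have "continuous_on Bs f" unfolding f_def by (intro continuous_intros)
  then obtain cs where cs: "cs \<in> Bs" "\<forall>c\<in>Bs. f c \<le> f cs"
    using continuous_attains_sup[OF cBs neB] by blast
  have csP: "mp cs \<in> P1" and cst: "trc cs = 1" using cs(1) Bs_iff by auto
  have hcs: "herm cs" using csP Pc_char by blast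
  have fexp: "f c = norm c ^ 2 - 2 * (t * inner a c) + norm p ^ 2" for c
  proof -
    have "f c = norm (c + (- p))^2" unfolding f_def by simp
    also have "\<dots> = norm c^2 + 2 * inner c (-p) + norm (-p)^2" by (rule nsq)
    also have "\<dots> = norm c ^ 2 - 2 * (t * inner a c) + norm p ^ 2" unfolding p_def by (simp add: inner_commute)
    finally show ?thesis .
  qed
  have neg: "inner a cs < 0"
  proof -
    define x where "x = inner a cs"
    have h1: "norm cs ^ 2 - 2 * (t * x) \<ge> norm c1' ^ 2 - 2 * (t * m)"
      using cs(2) c1'B unfolding fexp x_def m_def by force
    have h2: "norm c1' ^ 2 \<ge> 0" by simp
    have h3: "norm cs ^ 2 \<le> R ^ 2" using Rb[OF cs(1)] by (simp add: power_mono)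
    have "2 * (t * x) \<le> t * m" using h1 h2 h3 tm by linarith
    moreover have "t * m < 0" using tp m0 by (simp add: mult_pos_neg)
    ultimately have "t * x < 0" by linarith
    then show ?thesis unfolding x_def using tp by (simp add: mult_less_0_iff)
  qed
  define w0 where "w0 = cs - p"
  define \<gamma> where "\<gamma> = inner w0 cs"
  have ii: "2 * (inner w0 c - \<gamma>) \<le> - (norm (c - cs) ^ 2)" if "c \<in> Bs" for c
  proof -
    have "f c \<le> f cs" using cs(2) that by blast
    moreover have "f c = norm (c - cs) ^ 2 + 2 * inner (c - cs) w0 + norm w0 ^ 2"
      unfolding f_def w0_def using nsq[of "c - cs" "cs - p"] by simp
    moreover have "f cs = norm w0 ^ 2" unfolding f_def w0_def ..
    moreover have "inner (c - cs) w0 = inner w0 c - \<gamma>" unfolding \<gamma>_def by (simp add: inner_diff_left inner_diff_right inner_commute[of _ w0])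
    ultimately show ?thesis by (smt (verit))
  qed
  define w where "w = \<gamma> *\<^sub>R mat 1 - w0"
  have lw: "inner w c = \<gamma> * trc c - inner w0 c" for c unfolding w_def trc_def by (simp add: inner_diff_left)
  have iii: "inner w c \<ge> 0 \<and> (inner w c = 0 \<longrightarrow> c = trc c *\<^sub>R cs)" if cP: "mp c \<in> P1" for c
  proof (cases "c = 0")
    case True then show ?thesis by (simp add: trc_def)
  next
    case False
    define s where "s = trc c"
    have s0: "s > 0" unfolding s_def using tpos[OF cP False] .
    define c' where "c' = (1 / s) *\<^sub>R c"
    have c'B: "c' \<in> Bs" unfolding Bs_iff c'_def trc_scale using Pc_scale[OF cP] s0 s_def by simp
    have cc': "c = s *\<^sub>R c'" unfolding c'_def using s0 by simp
    have e: "inner w c = s * inner w c'" unfolding cc' by simp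
    have "2 * inner w c' \<ge> norm (c' - cs) ^ 2"
      using ii[OF c'B] c'B unfolding lw Bs_iff by simp
    then have nn: "inner w c' \<ge> 0" by (smt (verit) zero_le_power2)
    have "inner w c = 0 \<longrightarrow> c = trc c *\<^sub>R cs"
    proof
      assume "inner w c = 0"
      then have "inner w c' = 0" using e s0 by simp
      then have "norm (c' - cs) ^ 2 \<le> 0" using \<open>2 * inner w c' \<ge> norm (c' - cs) ^ 2\<close> by simp
      then have "c' = cs" by simp
      then have "c = s *\<^sub>R cs" using cc' by simp
      then show "c = trc c *\<^sub>R cs" using s_def by simp
    qed
    then show ?thesis using e nn s0 by simp
  qed
  define A0 where "A0 = hs (cj w)"
  have hA0: "herm A0" unfolding A0_def by (rule herm_hs)
  have rA0: "Re (bl A0 c) = inner w c" if "herm c" for c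
    unfolding A0_def bl_comm[of _ c] Re_bl_hs[OF that] Re_bl_cj ..
  have A0V: "A0 \<in> V1"
  proof (rule ccontr)
    assume "A0 \<notin> V1"
    then obtain c' where c': "mp c' \<in> P1" "Re (bl A0 c') < 0" using sep[OF hA0] by blast
    have "herm c'" using c'(1) Pc_char by blast
    then have "inner w c' < 0" using c'(2) rA0 by simp
    then show False using iii[OF c'(1)] by simp
  qed
  have blA0: "bl A0 cs = 0"
  proof (rule complex_eqI)
    show "Re (bl A0 cs) = Re 0" unfolding rA0[OF hcs] lw cst \<gamma>_def by simp
    show "Im (bl A0 cs) = Im 0" using bl_real[OF hA0 hcs] by simp
  qed
  define \<phi> where "\<phi> = mp cs"
  have A0perp: "A0 \<in> perpV (ray \<phi>)"
    unfolding perpV_def \<phi>_def ray_eq using A0V blA0 by (auto simp: pair_ray)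
  have perp_eq: "perpP (perpV (ray \<phi>)) = ray \<phi>"
  proof
    show "perpP (perpV (ray \<phi>)) \<subseteq> ray \<phi>"
    proof
      fix \<psi> assume "\<psi> \<in> perpP (perpV (ray \<phi>))"
      then have \<psi>P: "\<psi> \<in> P1" and \<psi>0: "pair A0 \<psi> = 0" using A0perp unfolding perpP_def by auto
      have l: "lin_map \<psi>" using \<psi>P unfolding P1_def by blast
      define c where "c = ch \<psi>"
      have \<psi>c: "\<psi> = mp c" unfolding c_def using lin_mp[OF l] .
      have cP: "mp c \<in> P1" using \<psi>P \<psi>c by simp
      have "herm c" using cP Pc_char by blast
      moreover have "bl A0 c = 0" using \<psi>0 \<psi>c by (simp add: pair_mp)
      ultimately have "inner w c = 0" using rA0 by force
      then have "c = trc c *\<^sub>R cs" using iii[OF cP] by blast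
      then have "mp c = mp (trc c *\<^sub>R cs)" by (rule arg_cong)
      moreover have "trc c \<ge> 0" using trc_nonneg[OF cP] .
      ultimately show "\<psi> \<in> ray \<phi>" unfolding \<phi>_def ray_eq \<psi>c by blast
    qed
    show "ray \<phi> \<subseteq> perpP (perpV (ray \<phi>))"
    proof
      fix \<psi> assume "\<psi> \<in> ray \<phi>"
      then obtain t' where t': "t' \<ge> 0" "\<psi> = mp (t' *\<^sub>R cs)" unfolding \<phi>_def ray_eq by blast
      have \<psi>P: "\<psi> \<in> P1" using Pc_scale[OF csP t'(1)] t'(2) by simp
      have \<phi>r: "\<phi> \<in> ray \<phi>" unfolding \<phi>_def ray_eq by (rule CollectI, rule exI[of _ 1]) simp
      have "pair B \<psi> = 0" if "B \<in> perpV (ray \<phi>)" for B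
      proof -
        have "pair B \<phi> = 0" using that \<phi>r unfolding perpV_def by blast
        then have "bl B cs = 0" unfolding \<phi>_def pair_mp .
        then show ?thesis unfolding t'(2) pair_ray by simp
      qed
      then show "\<psi> \<in> perpP (perpV (ray \<phi>))" unfolding perpP_def using \<psi>P by blast
    qed
  qed
  have \<phi>nz: "\<phi> \<noteq> (\<lambda>X. 0)"
  proof
    assume "\<phi> = (\<lambda>X. 0)"
    then have "cs = 0" using ch_mp[of cs] ch_zero unfolding \<phi>_def by metis
    then show False using cst by (simp add: trc_def)
  qed
  have ex: "exposed_map \<phi>" unfolding exposed_map_def using csP \<phi>nz perp_eq \<phi>_def by blast
  have "pair A \<phi> \<in> \<real>" unfolding \<phi>_def pair_mp complex_is_Real_iff using bl_real[OF hA hcs] .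
  moreover have "Re (pair A \<phi>) < 0" unfolding \<phi>_def pair_mp ra using neg .
  ultimately show ?thesis using ex by blast
qed


theorem mainTheorem2:
  fixes A :: "complex^('n::finite \<times> 'm::finite)^('n \<times> 'm)"
  assumes "psd A"
  shows "A \<notin> V1 \<longleftrightarrow>
    (\<exists>\<phi> :: complex^'m^'m \<Rightarrow> complex^'n^'n.
        exposed_map \<phi> \<and> pair A \<phi> \<in> \<real> \<and> Re (pair A \<phi>) < 0)"
proof
  assume "A \<notin> V1"
  then show "\<exists>\<phi> :: complex^'m^'m \<Rightarrow> complex^'n^'n.
        exposed_map \<phi> \<and> pair A \<phi> \<in> \<real> \<and> Re (pair A \<phi>) < 0"
    using hard_dir[OF assms] by blast
next
  assume "\<exists>\<phi> :: complex^'m^'m \<Rightarrow> complex^'n^'n.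
        exposed_map \<phi> \<and> pair A \<phi> \<in> \<real> \<and> Re (pair A \<phi>) < 0"
  then obtain \<phi> :: "complex^'m^'m \<Rightarrow> complex^'n^'n" where
    \<phi>: "exposed_map \<phi>" "Re (pair A \<phi>) < 0" by blast
  show "A \<notin> V1"
  proof
    assume "A \<in> V1"
    then have "Re (pair A \<phi>) \<ge> 0" using easy_dir \<phi>(1) unfolding exposed_map_def by blast
    then show False using \<phi>(2) by simp
  qed
qed

end
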